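(* Let $G^\dagger=(V^\dagger,E^\dagger)$ be a graph whose vertices are partitioned into blossom and non-blossom vertices, with weights $w^\dagger\in\mathbb{R}^{|E^\dagger|}$. Let $G^\ddagger=(V^\dagger,E^\ddagger)$ be obtained by duplicating every edge $e\in E^\dagger$ into two parallel edges $e_1,e_2$, with weights $w^\ddagger_{e_1}=w^\ddagger_{e_2}=w^\dagger_e$. Consider the LP: minimize $w^\ddagger\cdot x$ subject to $\sum_{e\in\delta(v)}x_e=2$ for every non-blossom $v\in V^\dagger$, $\sum_{e\in\delta(v)}x_e\ge 2$ for every blossom vertex $v\in V^\dagger$, $x\in[0,1]^{|E^\ddagger|}$ (here $\delta(v)$ is taken in $G^\ddagger$). Consider the graphical model on binary variables $x=[x_e]_{e\in E^\ddagger}\in\{0,1\}^{|E^\ddagger|}$, $$\Pr[X=x]\propto\prod_{e\in E^\ddagger}e^{-w^\ddagger_e x_e}\prod_{v\in V^\dagger}\psi_v(x_{\delta(v)}),$$ where $\psi_v(x_{\delta(v)})=1$ if $v$ is non-blossom and $\sum_{e\in\delta(v)}x_e=2$, or if $v$ is a blossom vertex and $\sum_{e\in\delta(v)}x_e\ge2$, and $\psi_v(x_{\delta(v)})=0$ otherwise. If the LP has a unique optimal solution $x^*$, then max-product belief propagation applied to this graphical model converges to $x^*$, i.e., its estimate $z^{BP}$ equals $x^*$ for all sufficiently many iterations.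
   Context: Max-product BP on a graphical model $\Pr[z]\propto\prod_i\psi_i(z_i)\prod_{\alpha\in F}\psi_\alpha(z_\alpha)$ with binary variables: for each variable $i$ let $F_i=\{\alpha\in F: i\in\alpha\}$. At iteration $t$ it maintains messages $m^t_{\alpha\to i}(c),m^t_{i\to\alpha}(c)$, $c\in\{0,1\}$, for $\alpha\in F_i$, updated by $m^{t+1}_{\alpha\to i}(c)=\max_{z_\alpha:z_i=c}\psi_\alpha(z_\alpha)\prod_{j\in\alpha\setminus i}m^t_{j\to\alpha}(z_j)$ and $m^{t+1}_{i\to\alpha}(c)=\psi_i(c)\prod_{\alpha'\in F_i\setminus\alpha}m^t_{\alpha'\to i}(c)$. Beliefs are $b_i[c]=\psi_i(c)\prod_{\alpha\in F_i}m_{\alpha\to i}(c)$ and the BP estimate is $z^{BP}_i=1$ if $b_i[1]>b_i[0]$, $0$ if $b_i[1]<b_i[0]$, and undetermined ("?") if equal. Here the variables are the $x_e$, $\psi_e(c)=e^{-w^\ddagger_e c}$, and the factors are the $\psi_v$, $v\in V^\dagger$ (factor $v$ involves the variables $x_e$, $e\in\delta(v)$). *)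

theory Defs
  imports Main "HOL-Library.Extended_Real" Complex_Main
begin

(* G-dagger: vertex set V, edge set E, ends e = the two endpoints of edge e,
   B = set of blossom vertices, w = edge weights.
   G-double-dagger: edge (e,b), b :: bool, are the two parallel copies e_1, e_2 of e. *)

definition ddedges :: "'e set \<Rightarrow> ('e \<times> bool) set" where
  "ddedges E = E \<times> UNIV"

definition delta :: "'e set \<Rightarrow> ('e \<Rightarrow> 'v set) \<Rightarrow> 'v \<Rightarrow> ('e \<times> bool) set" where
  "delta E ends v = {i \<in> ddedges E. v \<in> ends (fst i)}"

definition wdd :: "('e \<Rightarrow> real) \<Rightarrow> ('e \<times> bool) \<Rightarrow> real" where
  "wdd w i = w (fst i)"

definition lp_feasible :: "'v set \<Rightarrow> 'e set \<Rightarrow> ('e \<Rightarrow> 'v set) \<Rightarrow> 'v set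
     \<Rightarrow> (('e \<times> bool) \<Rightarrow> real) \<Rightarrow> bool" where
  "lp_feasible V E ends B x \<longleftrightarrow>
     (\<forall>i. i \<notin> ddedges E \<longrightarrow> x i = 0) \<and>
     (\<forall>i \<in> ddedges E. 0 \<le> x i \<and> x i \<le> 1) \<and>
     (\<forall>v \<in> V - B. (\<Sum>i \<in> delta E ends v. x i) = 2) \<and>
     (\<forall>v \<in> V \<inter> B. (\<Sum>i \<in> delta E ends v. x i) \<ge> 2)"

definition lp_cost :: "'e set \<Rightarrow> ('e \<Rightarrow> real) \<Rightarrow> (('e \<times> bool) \<Rightarrow> real) \<Rightarrow> real" where
  "lp_cost E w x = (\<Sum>i \<in> ddedges E. wdd w i * x i)"

definition lp_optimal :: "'v set \<Rightarrow> 'e set \<Rightarrow> ('e \<Rightarrow> 'v set) \<Rightarrow> 'v set \<Rightarrow> ('e \<Rightarrow> real)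
     \<Rightarrow> (('e \<times> bool) \<Rightarrow> real) \<Rightarrow> bool" where
  "lp_optimal V E ends B w x \<longleftrightarrow> lp_feasible V E ends B x \<and>
     (\<forall>y. lp_feasible V E ends B y \<longrightarrow> lp_cost E w x \<le> lp_cost E w y)"

definition bval :: "bool \<Rightarrow> real" where
  "bval c = (if c then 1 else 0)"

definition psi_var :: "('e \<Rightarrow> real) \<Rightarrow> ('e \<times> bool) \<Rightarrow> bool \<Rightarrow> real" where
  "psi_var w i c = exp (- wdd w i * bval c)"

definition psi_fac :: "'e set \<Rightarrow> ('e \<Rightarrow> 'v set) \<Rightarrow> 'v set \<Rightarrow> 'v \<Rightarrow> (('e \<times> bool) \<Rightarrow> bool) \<Rightarrow> real" where
  "psi_fac E ends B v z =
     (let s = card {j \<in> delta E ends v. z j} in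
      if v \<in> B then (if s \<ge> 2 then 1 else 0) else (if s = 2 then 1 else 0))"

definition local_assign :: "'e set \<Rightarrow> ('e \<Rightarrow> 'v set) \<Rightarrow> 'v \<Rightarrow> ('e \<times> bool) \<Rightarrow> bool
     \<Rightarrow> (('e \<times> bool) \<Rightarrow> bool) set" where
  "local_assign E ends v i c = {z. (\<forall>j. j \<notin> delta E ends v \<longrightarrow> \<not> z j) \<and> z i = c}"

(* max-product BP messages at iteration t:
   first component  m_{v -> i}(c)  (factor to variable),
   second component m_{i -> v}(c)  (variable to factor);
   all messages initialised to 1. *)
fun bp_msgs :: "'e set \<Rightarrow> ('e \<Rightarrow> 'v set) \<Rightarrow> 'v set \<Rightarrow> ('e \<Rightarrow> real) \<Rightarrow> nat \<Rightarrow>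
     ('v \<Rightarrow> ('e \<times> bool) \<Rightarrow> bool \<Rightarrow> real) \<times> (('e \<times> bool) \<Rightarrow> 'v \<Rightarrow> bool \<Rightarrow> real)" where
  "bp_msgs E ends B w 0 = (\<lambda>v i c. 1, \<lambda>i v c. 1)"
| "bp_msgs E ends B w (Suc t) =
     (let mf = fst (bp_msgs E ends B w t); mv = snd (bp_msgs E ends B w t) in
      (\<lambda>v i c. Max ((\<lambda>z. psi_fac E ends B v z *
                         (\<Prod>j \<in> delta E ends v - {i}. mv j v (z j))) ` local_assign E ends v i c),
       \<lambda>i v c. psi_var w i c * (\<Prod>v' \<in> ends (fst i) - {v}. mf v' i c)))"

(* belief b_i[c] at iteration t; the factors containing x_i are the endpoints of edge fst i *)
definition belief :: "'e set \<Rightarrow> ('e \<Rightarrow> 'v set) \<Rightarrow> 'v set \<Rightarrow> ('e \<Rightarrow> real) \<Rightarrow> nat \<Rightarrow>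
     ('e \<times> bool) \<Rightarrow> bool \<Rightarrow> real" where
  "belief E ends B w t i c =
     psi_var w i c * (\<Prod>v \<in> ends (fst i). fst (bp_msgs E ends B w t) v i c)"

(* BP estimate: Some 1, Some 0, or None ("?") *)
definition bp_estimate :: "'e set \<Rightarrow> ('e \<Rightarrow> 'v set) \<Rightarrow> 'v set \<Rightarrow> ('e \<Rightarrow> real) \<Rightarrow> nat \<Rightarrow>
     ('e \<times> bool) \<Rightarrow> real option" where
  "bp_estimate E ends B w t i =
     (if belief E ends B w t i True > belief E ends B w t i False then Some 1
      else if belief E ends B w t i True < belief E ends B w t i False then Some 0
      else None)"

end

theory Submission
  imports Defs
begin

fun walk :: "'a set \<Rightarrow> ('a \<Rightarrow> 'n) \<Rightarrow> ('a \<Rightarrow> 'n) \<Rightarrow> 'n \<Rightarrow> 'a list \<Rightarrow> bool" where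
  "walk A s t a [] = True"
| "walk A s t a (x#W) = (x \<in> A \<and> s x = a \<and> walk A s t (t x) W)"

fun wend :: "('a \<Rightarrow> 'n) \<Rightarrow> 'n \<Rightarrow> 'a list \<Rightarrow> 'n" where
  "wend t a [] = a"
| "wend t a (x#W) = wend t (t x) W"

fun wnodes :: "('a \<Rightarrow> 'n) \<Rightarrow> 'n \<Rightarrow> 'a list \<Rightarrow> 'n list" where
  "wnodes t a [] = [a]"
| "wnodes t a (x#W) = a # wnodes t (t x) W"

lemma walk_append: "walk A s t a (W1 @ W2) = (walk A s t a W1 \<and> walk A s t (wend t a W1) W2)"
  by (induction W1 arbitrary: a) auto

lemma wend_append: "wend t a (W1 @ W2) = wend t (wend t a W1) W2"
  by (induction W1 arbitrary: a) auto

lemma length_wnodes: "length (wnodes t a W) = Suc (length W)"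
  by (induction W arbitrary: a) auto

lemma set_wnodes: "walk A s t a W \<Longrightarrow> a \<in> X \<Longrightarrow> s ` A \<union> t ` A \<subseteq> X \<Longrightarrow> set (wnodes t a W) \<subseteq> X"
  by (induction W arbitrary: a) auto

lemma mem_wnodes_split: "b \<in> set (wnodes t a W) \<Longrightarrow> \<exists>W1 W2. W = W1 @ W2 \<and> wend t a W1 = b"
proof (induction W arbitrary: a)
  case Nil then show ?case by auto
next
  case (Cons x W)
  show ?case
  proof (cases "b = a")
    case True then show ?thesis by (intro exI[of _ "[]"] exI[of _ "x#W"]) auto
  next
    case False
    then have "b \<in> set (wnodes t (t x) W)" using Cons.prems by auto
    from Cons.IH[OF this] obtain W1 W2 where "W = W1 @ W2" "wend t (t x) W1 = b" by blast
    then show ?thesis by (intro exI[of _ "x#W1"] exI[of _ W2]) auto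
  qed
qed

lemma nondistinct_split:
  "\<not> distinct (wnodes t a W) \<Longrightarrow> \<exists>W1 W2 W3. W = W1 @ W2 @ W3 \<and> W2 \<noteq> [] \<and> wend t (wend t a W1) W2 = wend t a W1"
proof (induction W arbitrary: a)
  case Nil then show ?case by auto
next
  case (Cons x W)
  show ?case
  proof (cases "a \<in> set (wnodes t (t x) W)")
    case True
    from mem_wnodes_split[OF this] obtain P Q where "W = P @ Q" "wend t (t x) P = a" by blast
    then show ?thesis by (intro exI[of _ "[]"] exI[of _ "x#P"] exI[of _ Q]) auto
  next
    case False
    then have "\<not> distinct (wnodes t (t x) W)" using Cons.prems by auto
    from Cons.IH[OF this] obtain W1 W2 W3 where "W = W1 @ W2 @ W3" "W2 \<noteq> []"
      "wend t (wend t (t x) W1) W2 = wend t (t x) W1" by blast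
    then show ?thesis by (intro exI[of _ "x#W1"] exI[of _ W2] exI[of _ W3]) auto
  qed
qed

lemma long_split:
  assumes "finite A" "walk A s t a W" "a \<in> s ` A \<union> t ` A" "length W \<ge> card (s ` A \<union> t ` A)"
  shows "\<exists>W1 W2 W3. W = W1 @ W2 @ W3 \<and> W2 \<noteq> [] \<and> wend t (wend t a W1) W2 = wend t a W1"
proof -
  let ?X = "s ` A \<union> t ` A"
  have "set (wnodes t a W) \<subseteq> ?X" using set_wnodes[OF assms(2) assms(3)] by auto
  then have "card (set (wnodes t a W)) \<le> card ?X" using assms(1) by (intro card_mono) auto
  moreover have "length (wnodes t a W) > card ?X" using assms(4) length_wnodes[of t a W] by auto
  ultimately have "\<not> distinct (wnodes t a W)" using distinct_card by fastforce
  then show ?thesis by (rule nondistinct_split)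
qed

definition lc :: "('a \<Rightarrow> bool) \<Rightarrow> 'a list \<Rightarrow> real" where
  "lc l W = sum_list (map (\<lambda>x. if l x then 1 else 0) W)"

lemma lc_simps[simp]: "lc l [] = 0" "lc l (x#W) = (if l x then 1 else 0) + lc l W"
  "lc l (W1 @ W2) = lc l W1 + lc l W2"
  by (auto simp: lc_def)

lemma lc_nonneg: "lc l W \<ge> 0"
  by (induction W) auto

lemma lc_le_length: "lc l W \<le> real (length W)"
  by (induction W) auto

lemma lc_pos: "\<exists>x\<in>set W. l x \<Longrightarrow> lc l W > 0"
  by (induction W) (auto simp: add_pos_nonneg lc_nonneg add_nonneg_pos)

lemma lc_zero: "\<not> (\<exists>x\<in>set W. l x) \<Longrightarrow> lc l W = 0"
  by (induction W) auto

lemma sum_list_lower: "(\<forall>x\<in>set W. c x \<ge> - C) \<Longrightarrow> sum_list (map c W) \<ge> - real (length W) * (C::real)"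
  by (induction W) (auto simp: algebra_simps)

lemma potential:
  fixes A :: "'a set" and s t :: "'a \<Rightarrow> 'n" and c :: "'a \<Rightarrow> real" and l :: "'a \<Rightarrow> bool"
  assumes fin: "finite A"
    and cyc: "\<And>a W. walk A s t a W \<Longrightarrow> W \<noteq> [] \<Longrightarrow> wend t a W = a \<Longrightarrow>
        sum_list (map c W) \<ge> 0 \<and> ((\<exists>x\<in>set W. l x) \<longrightarrow> sum_list (map c W) > 0)"
  shows "\<exists>\<sigma> \<delta>. \<delta> > 0 \<and> (\<forall>x\<in>A. c x \<ge> \<sigma> (s x) - \<sigma> (t x) + (if l x then \<delta> else 0))"
proof -
  define X where "X = s ` A \<union> t ` A"
  define N where "N = card X"
  define cost where "cost W = sum_list (map c W)" for W
  have cost_app: "cost (W1 @ W2) = cost W1 + cost W2" for W1 W2 by (simp add: cost_def)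
  define S where "S = {W. set W \<subseteq> A \<and> length W \<le> N \<and> (\<exists>a. walk A s t a W \<and> W \<noteq> [] \<and> wend t a W = a) \<and> (\<exists>x\<in>set W. l x)}"
  have "S \<subseteq> {W. set W \<subseteq> A \<and> length W \<le> N}" by (auto simp: S_def)
  then have finS: "finite S" using finite_lists_length_le[OF fin] finite_subset by blast
  define \<mu> where "\<mu> = (if S = {} then 1 else Min (cost ` S))"
  have walk_set: "walk A s t a W \<Longrightarrow> set W \<subseteq> A" for a W
    by (induction W arbitrary: a) auto
  have Spos: "W \<in> S \<Longrightarrow> cost W > 0" for W
    using cyc unfolding S_def cost_def by blast
  have mupos: "\<mu> > 0"
  proof (cases "S = {}")
    case True then show ?thesis by (simp add: \<mu>_def)
  next
    case False
    then have "Min (cost ` S) \<in> cost ` S" using finS by (intro Min_in) auto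
    then show ?thesis using Spos False by (auto simp: \<mu>_def)
  qed
  have mule: "W \<in> S \<Longrightarrow> \<mu> \<le> cost W" for W
    using finS by (auto simp: \<mu>_def)
  define \<delta> where "\<delta> = \<mu> / (real N + 1)"
  have dpos: "\<delta> > 0" using mupos by (simp add: \<delta>_def)
  have hdX: "walk A s t a W \<Longrightarrow> W \<noteq> [] \<Longrightarrow> a \<in> X" for a W
    by (cases W) (auto simp: X_def)
  have closed: "\<And>a W. length W = n \<Longrightarrow> walk A s t a W \<Longrightarrow> W \<noteq> [] \<Longrightarrow> wend t a W = a \<Longrightarrow> cost W \<ge> \<delta> * lc l W" for n
  proof (induction n rule: less_induct)
    case (less n a W)
    show ?case
    proof (cases "length W \<le> N")
      case True
      show ?thesis
      proof (cases "\<exists>x\<in>set W. l x")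
        case True
        then have "W \<in> S" using less.prems \<open>length W \<le> N\<close> walk_set by (auto simp: S_def)
        then have "\<mu> \<le> cost W" by (rule mule)
        moreover have "\<delta> * lc l W \<le> \<mu>"
        proof -
          have "lc l W \<le> real N + 1" using lc_le_length[of l W] \<open>length W \<le> N\<close> by linarith
          then have "\<delta> * lc l W \<le> \<delta> * (real N + 1)" using dpos by (intro mult_left_mono) auto
          also have "\<dots> = \<mu>" by (simp add: \<delta>_def)
          finally show ?thesis .
        qed
        ultimately show ?thesis by linarith
      next
        case False
        then show ?thesis using cyc[OF less.prems(2,3,4)] lc_zero[OF False] by (simp add: cost_def)
      qed
    next
      case False
      obtain W0 \<beta> where W: "W = W0 @ [\<beta>]" using less.prems(3) by (metis rev_exhaust)
      have w0: "walk A s t a W0" using less.prems(2) W by (simp add: walk_append)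
      have "length W0 \<ge> card X" using False W by (simp add: N_def)
      from long_split[OF fin w0 _ this[unfolded X_def]] hdX[OF less.prems(2,3)]
      obtain W1 W2 W3 where sp: "W0 = W1 @ W2 @ W3" "W2 \<noteq> []" "wend t (wend t a W1) W2 = wend t a W1"
        by (auto simp: X_def)
      define b where "b = wend t a W1"
      have wW: "walk A s t a (W1 @ W2 @ (W3 @ [\<beta>]))" using less.prems(2) W sp by simp
      have c2: "walk A s t b W2" using wW by (simp add: walk_append b_def)
      have c13: "walk A s t a (W1 @ (W3 @ [\<beta>]))" using wW sp(3) by (simp add: walk_append b_def wend_append)
      have e13: "wend t a (W1 @ (W3 @ [\<beta>])) = a" using less.prems(4) W sp(3)
        by (simp add: wend_append)
      have IH2: "cost W2 \<ge> \<delta> * lc l W2"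
        by (rule less.IH[OF _ refl c2 sp(2)]) (use W sp b_def less.prems(1) in auto)
      have IH13: "cost (W1 @ (W3 @ [\<beta>])) \<ge> \<delta> * lc l (W1 @ (W3 @ [\<beta>]))"
        by (rule less.IH[OF _ refl c13 _ e13]) (use W sp less.prems(1) in auto)
      have "cost W = cost W2 + cost (W1 @ (W3 @ [\<beta>]))" using W sp by (simp add: cost_app)
      moreover have "lc l W = lc l W2 + lc l (W1 @ (W3 @ [\<beta>]))" using W sp by simp
      ultimately show ?thesis using IH2 IH13 by (simp add: distrib_left)
    qed
  qed
  define Cm where "Cm = (\<Sum>x\<in>A. \<bar>c x\<bar>)"
  have Cm: "x \<in> A \<Longrightarrow> c x \<ge> - Cm" for x
  proof -
    assume "x \<in> A"
    then have "\<bar>c x\<bar> \<le> Cm" unfolding Cm_def using fin by (intro member_le_sum) auto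
    then show ?thesis by linarith
  qed
  have Cm0: "Cm \<ge> 0" unfolding Cm_def by (intro sum_nonneg) auto
  define K where "K = real N * (Cm + \<delta>)"
  have walks: "\<And>a W. length W = n \<Longrightarrow> walk A s t a W \<Longrightarrow> cost W \<ge> \<delta> * lc l W - K" for n
  proof (induction n rule: less_induct)
    case (less n a W)
    show ?case
    proof (cases "length W \<le> N")
      case True
      have "cost W \<ge> - real (length W) * Cm" unfolding cost_def
        using walk_set[OF less.prems(2)] Cm by (intro sum_list_lower) auto
      moreover have "real (length W) * Cm \<le> real N * Cm" using True Cm0 by (intro mult_right_mono) auto
      moreover have "\<delta> * lc l W \<le> \<delta> * real N" using lc_le_length[of l W] True dpos
        by (intro mult_left_mono) auto
      ultimately show ?thesis by (simp add: K_def algebra_simps)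
    next
      case False
      then have ne: "W \<noteq> []" by auto
      have "length W \<ge> card X" using False by (simp add: N_def)
      from long_split[OF fin less.prems(2) _ this[unfolded X_def]] hdX[OF less.prems(2) ne]
      obtain W1 W2 W3 where sp: "W = W1 @ W2 @ W3" "W2 \<noteq> []" "wend t (wend t a W1) W2 = wend t a W1"
        by (auto simp: X_def)
      define b where "b = wend t a W1"
      have c2: "walk A s t b W2" using less.prems(2) sp(1) by (simp add: walk_append b_def)
      have wW: "walk A s t a (W1 @ W2 @ W3)" using less.prems(2) sp(1) by simp
      have c13: "walk A s t a (W1 @ W3)" using wW sp(3) unfolding walk_append wend_append b_def by simp
      have C2: "cost W2 \<ge> \<delta> * lc l W2" using closed[OF refl c2 sp(2)] sp(3) b_def by simp
      have IH13: "cost (W1 @ W3) \<ge> \<delta> * lc l (W1 @ W3) - K"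
        by (rule less.IH[OF _ refl c13]) (use sp less.prems(1) in auto)
      have "cost W = cost W2 + cost (W1 @ W3)" using sp by (simp add: cost_app)
      moreover have "lc l W = lc l W2 + lc l (W1 @ W3)" using sp by simp
      ultimately show ?thesis using C2 IH13 by (simp add: distrib_left)
    qed
  qed
  define \<sigma> where "\<sigma> x = Inf ((\<lambda>W. cost W - \<delta>/2 * lc l W) ` {W. walk A s t x W})" for x
  have bdd: "bdd_below ((\<lambda>W. cost W - \<delta>/2 * lc l W) ` {W. walk A s t x W})" for x
  proof (rule bdd_belowI[of _ "-K"])
    fix y assume "y \<in> (\<lambda>W. cost W - \<delta>/2 * lc l W) ` {W. walk A s t x W}"
    then obtain W where "walk A s t x W" "y = cost W - \<delta>/2 * lc l W" by auto
    moreover have "cost W \<ge> \<delta> * lc l W - K" using walks[OF refl \<open>walk A s t x W\<close>] .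
    moreover have "lc l W \<ge> 0" by (rule lc_nonneg)
    moreover have "\<delta>/2 * lc l W \<ge> 0" using dpos \<open>lc l W \<ge> 0\<close> by simp
    ultimately show "-K \<le> y" by linarith
  qed
  have "\<forall>x\<in>A. c x \<ge> \<sigma> (s x) - \<sigma> (t x) + (if l x then \<delta>/2 else 0)"
  proof
    fix x assume xA: "x \<in> A"
    have "\<sigma> (s x) - c x + (if l x then \<delta>/2 else 0) \<le> \<sigma> (t x)"
      unfolding \<sigma>_def[of "t x"]
    proof (rule cInf_greatest)
      show "(\<lambda>W. cost W - \<delta>/2 * lc l W) ` {W. walk A s t (t x) W} \<noteq> {}"
        by (auto intro!: exI[of _ "[]"])
    next
      fix y assume "y \<in> (\<lambda>W. cost W - \<delta>/2 * lc l W) ` {W. walk A s t (t x) W}"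
      then obtain W where W: "walk A s t (t x) W" "y = cost W - \<delta>/2 * lc l W" by auto
      have "walk A s t (s x) (x # W)" using W xA by simp
      then have "\<sigma> (s x) \<le> cost (x#W) - \<delta>/2 * lc l (x#W)"
        unfolding \<sigma>_def by (intro cInf_lower bdd imageI) (simp add: xA W(1))
      then show "\<sigma> (s x) - c x + (if l x then \<delta>/2 else 0) \<le> y"
        using W by (auto simp: cost_def algebra_simps)
    qed
    then show "c x \<ge> \<sigma> (s x) - \<sigma> (t x) + (if l x then \<delta>/2 else 0)" by linarith
  qed
  then show ?thesis using dpos by (intro exI[of _ \<sigma>] exI[of _ "\<delta>/2"]) auto
qed


locale setting =
  fixes V :: "'v set" and E :: "'e set" and ends :: "'e \<Rightarrow> 'v set"
    and B :: "'v set" and w :: "'e \<Rightarrow> real" and xstar :: "('e \<times> bool) \<Rightarrow> real"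
  assumes finV: "finite V" and finE: "finite E"
    and endsE: "\<forall>e \<in> E. ends e \<subseteq> V \<and> card (ends e) = 2"
    and BV: "B \<subseteq> V"
    and opt: "lp_optimal V E ends B w xstar"
    and uniq: "\<forall>y. lp_optimal V E ends B w y \<longrightarrow> y = xstar"
begin

definition Ev where "Ev v = {e\<in>E. v \<in> ends e}"
definition M where "M = {e\<in>E. xstar (e,True) = 1}"
definition Mdeg where "Mdeg v = card {e\<in>M. v \<in> ends e}"

lemma feas: "lp_feasible V E ends B xstar" using opt by (simp add: lp_optimal_def)

lemma better_eq: "lp_feasible V E ends B y \<Longrightarrow> lp_cost E w y \<le> lp_cost E w xstar \<Longrightarrow> y = xstar"
  using opt uniq unfolding lp_optimal_def by (meson order_trans)

lemma delta_eq: "delta E ends v = Ev v \<times> UNIV"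
  by (auto simp: delta_def ddedges_def Ev_def)

lemma finEv: "finite (Ev v)" using finE by (simp add: Ev_def)

lemma fin_delta: "finite (delta E ends v)" by (simp add: delta_eq finEv)

lemma sum_pair: "finite F \<Longrightarrow> (\<Sum>i\<in>F \<times> (UNIV::bool set). f i) = (\<Sum>e\<in>F. f (e,True) + f (e,False))"
proof -
  have "(\<Sum>i\<in>F \<times> (UNIV::bool set). f i) = (\<Sum>e\<in>F. \<Sum>b\<in>UNIV. f (e,b))"
    by (simp add: sum.cartesian_product)
  then show ?thesis by (simp add: UNIV_bool add.commute)
qed

lemma sum_delta: "(\<Sum>i\<in>delta E ends v. f i) = (\<Sum>e\<in>Ev v. f (e,True) + f (e,False))"
  by (simp add: delta_eq sum_pair finEv)

lemma cost_eq: "lp_cost E w y = (\<Sum>e\<in>E. w e * (y (e,True) + y (e,False)))"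
  by (simp add: lp_cost_def ddedges_def sum_pair finE wdd_def algebra_simps)

lemma feas_pairwise:
  assumes "\<forall>i. i \<notin> ddedges E \<longrightarrow> y i = 0"
    and "\<forall>i \<in> ddedges E. 0 \<le> y i \<and> y i \<le> 1"
    and "\<forall>e\<in>E. y (e,True) + y (e,False) = xstar (e,True) + xstar (e,False)"
  shows "lp_feasible V E ends B y" "lp_cost E w y = lp_cost E w xstar"
proof -
  have s: "(\<Sum>i\<in>delta E ends v. y i) = (\<Sum>i\<in>delta E ends v. xstar i)" for v
    unfolding sum_delta using assms(3) by (intro sum.cong) (auto simp: Ev_def)
  show "lp_feasible V E ends B y" using feas assms(1,2) s by (simp add: lp_feasible_def)
  show "lp_cost E w y = lp_cost E w xstar" unfolding cost_eq using assms(3) by (intro sum.cong) auto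
qed

lemma xstar_out: "i \<notin> ddedges E \<Longrightarrow> xstar i = 0" using feas unfolding lp_feasible_def by (cases i) auto
lemma xstar_bnd: "i \<in> ddedges E \<Longrightarrow> 0 \<le> xstar i \<and> xstar i \<le> 1" using feas by (simp add: lp_feasible_def)

lemma xstar_sym: "xstar (e,b) = xstar (e, \<not>b)"
proof -
  define y where "y i = xstar (fst i, \<not> snd i)" for i
  have 1: "\<forall>i. i \<notin> ddedges E \<longrightarrow> y i = 0" by (auto simp: y_def ddedges_def xstar_out)
  have 2: "\<forall>i\<in>ddedges E. 0 \<le> y i \<and> y i \<le> 1" by (auto simp: y_def ddedges_def xstar_bnd)
  have 3: "\<forall>e\<in>E. y (e, True) + y (e, False) = xstar (e, True) + xstar (e, False)" by (auto simp: y_def)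
  have "y = xstar" using feas_pairwise[OF 1 2 3] by (intro better_eq) auto
  then have "y (e,b) = xstar (e,b)" by simp
  then show ?thesis by (simp add: y_def)
qed

lemma xstar_01: assumes "e \<in> E" shows "xstar (e,True) = 0 \<or> xstar (e,True) = 1"
proof (rule ccontr)
  assume nn: "\<not> (xstar (e,True) = 0 \<or> xstar (e,True) = 1)"
  define p where "p = xstar (e,True)"
  have pb: "0 \<le> p" "p \<le> 1" using xstar_bnd[of "(e,True)"] assms by (auto simp: p_def ddedges_def)
  have pF: "xstar (e,False) = p" using xstar_sym[of e False] by (simp add: p_def)
  define \<epsilon> where "\<epsilon> = min p (1 - p)"
  have ep: "\<epsilon> > 0" using nn pb by (auto simp: \<epsilon>_def p_def)
  define y where "y = xstar((e,True) := p + \<epsilon>, (e,False) := p - \<epsilon>)"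
  have 1: "\<forall>i. i \<notin> ddedges E \<longrightarrow> y i = 0" using assms by (auto simp: y_def ddedges_def xstar_out)
  have 2: "\<forall>i\<in>ddedges E. 0 \<le> y i \<and> y i \<le> 1" using pb xstar_bnd by (auto simp: y_def \<epsilon>_def)
  have 3: "\<forall>e'\<in>E. y (e', True) + y (e', False) = xstar (e', True) + xstar (e', False)"
      using pF by (auto simp: y_def p_def)
  have "y = xstar" using feas_pairwise[OF 1 2 3] by (intro better_eq) auto
  then have "y (e,True) = xstar (e,True)" by simp
  then show False using ep by (simp add: y_def p_def)
qed

lemma xstar_val: "e \<in> E \<Longrightarrow> xstar (e,b) = (if e \<in> M then 1 else 0)"
  using xstar_01[of e] xstar_sym[of e b] xstar_sym[of e True] by (cases b) (auto simp: M_def)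

lemma ME: "M \<subseteq> E" by (auto simp: M_def)

lemma sum_x: "(\<Sum>i\<in>delta E ends v. xstar i) = 2 * real (Mdeg v)"
proof -
  have "(\<Sum>i\<in>delta E ends v. xstar i) = (\<Sum>e\<in>Ev v. if e \<in> M then 2 else 0)"
    unfolding sum_delta by (intro sum.cong) (auto simp: Ev_def xstar_val)
  also have "\<dots> = (\<Sum>e\<in>Ev v \<inter> M. (2::real))" by (simp only: sum.inter_restrict[OF finEv])
  also have "\<dots> = 2 * real (card (Ev v \<inter> M))" by simp
  also have "Ev v \<inter> M = {e\<in>M. v \<in> ends e}" using ME by (auto simp: Ev_def)
  finally show ?thesis by (simp add: Mdeg_def)
qed

lemma Mdeg_nb: "v \<in> V \<Longrightarrow> v \<notin> B \<Longrightarrow> Mdeg v = 1"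
  using feas sum_x[of v] by (auto simp: lp_feasible_def)

lemma Mdeg_bl: assumes "v \<in> V" "v \<in> B" shows "Mdeg v \<ge> 1"
proof -
  have "2 \<le> (\<Sum>i\<in>delta E ends v. xstar i)" using feas assms unfolding lp_feasible_def by auto
  then have "real (Mdeg v) \<ge> 1" using sum_x[of v] by linarith
  then show ?thesis by simp
qed

lemma Mdeg_pos: "v \<in> V \<Longrightarrow> Mdeg v \<ge> 1"
  using Mdeg_nb Mdeg_bl by fastforce

lemma exM: assumes "v \<in> V" shows "\<exists>g\<in>M. v \<in> ends g"
proof -
  have "card {e\<in>M. v \<in> ends e} \<ge> 1" using Mdeg_pos[OF assms] by (simp add: Mdeg_def)
  then have "{e\<in>M. v \<in> ends e} \<noteq> {}" by (metis card.empty not_one_le_zero)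
  then show ?thesis by blast
qed

lemma Mdeg1_unique: assumes "Mdeg v \<le> 1" "e \<in> M" "v \<in> ends e" "f \<in> M" "v \<in> ends f" shows "f = e"
proof -
  have fin: "finite {e\<in>M. v \<in> ends e}" by (rule finite_subset[OF _ finE]) (auto simp: M_def)
  have "{e, f} \<subseteq> {e\<in>M. v \<in> ends e}" using assms by auto
  from card_mono[OF fin this] have "card {e, f} \<le> 1" using assms(1) unfolding Mdeg_def by linarith
  then show ?thesis by (cases "e = f") auto
qed

lemma ends2: assumes "e \<in> E" "v \<in> ends e" shows "\<exists>u. ends e = {v,u} \<and> u \<noteq> v \<and> u \<in> V \<and> v \<in> V"
proof -
  from endsE assms(1) have "ends e \<subseteq> V" "card (ends e) = 2" by auto
  then obtain a b where ab: "ends e = {a,b}" "a \<noteq> b" by (auto simp: card_2_iff)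
  show ?thesis
  proof (cases "v = a")
    case True then show ?thesis using ab \<open>ends e \<subseteq> V\<close> by (intro exI[of _ b]) auto
  next
    case False then have "v = b" using ab assms(2) by auto
    then show ?thesis using ab \<open>ends e \<subseteq> V\<close> by (intro exI[of _ a]) auto
  qed
qed

end


lemma sum_list_zip_split: "length xs = length ys \<Longrightarrow>
  sum_list (map (\<lambda>(x,y). f x + g y) (zip xs ys)) = sum_list (map f xs) + sum_list (map (g::_\<Rightarrow>real) ys)"
  by (induction xs ys rule: list_induct2) auto

lemma sum_list_rotate1: "sum_list (map (g::_\<Rightarrow>real) (rotate1 xs)) = sum_list (map g xs)"
  by (cases xs) auto

lemma avg1: "(a::real) - d + \<delta> \<le> x \<Longrightarrow> c - b + \<delta> \<le> x \<Longrightarrow> (a - b)/2 + (c - d)/2 + \<delta> \<le> x" by (simp add: field_simps)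
lemma avg2: "(b::real) - c + \<delta> \<le> -x \<Longrightarrow> d - a + \<delta> \<le> -x \<Longrightarrow> x \<le> (a - b)/2 + (c - d)/2 - \<delta>" by (simp add: field_simps)
lemma avg3: "(n::real) - a \<le> 0 \<Longrightarrow> b - n \<le> 0 \<Longrightarrow> 0 \<le> (a - b)/2" by (simp add: field_simps)
lemma avg4: "(n::real) - b \<le> 0 \<Longrightarrow> a - n \<le> 0 \<Longrightarrow> (a - b)/2 \<le> 0" by (simp add: field_simps)

lemma sum_list_lb: "(\<forall>x\<in>set xs. f x \<ge> (c::real)) \<Longrightarrow> sum_list (map f xs) \<ge> real (length xs) * c"
  by (induction xs) (auto simp: algebra_simps)

context setting
begin

definition Arcs :: "(('v \<times> bool) option \<times> 'e option \<times> ('v \<times> bool) option) set" where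
 "Arcs = {(Some(v,True), Some f, Some(u,False)) | v f u. f \<in> E \<and> f \<notin> M \<and> ends f = {v,u} \<and> v \<noteq> u}
   \<union> {(Some(v,False), Some g, Some(u,True)) | v g u. g \<in> M \<and> ends g = {v,u} \<and> v \<noteq> u}
   \<union> {(None, None, Some(v,True)) | v. v \<in> B}
   \<union> {(Some(v,False), None, None) | v. v \<in> B}
   \<union> {(None, None, Some(v,False)) | v. v \<in> B \<and> Mdeg v \<ge> 2}
   \<union> {(Some(v,True), None, None) | v. v \<in> B \<and> Mdeg v \<ge> 2}"

definition cst :: "('v \<times> bool) option \<times> 'e option \<times> ('v \<times> bool) option \<Rightarrow> real" where
  "cst \<alpha> = (case \<alpha> of (Some (a,b), Some e, _) \<Rightarrow> if b then w e else - w e | _ \<Rightarrow> 0)"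

definition sgn :: "'e \<Rightarrow> real" where "sgn e = (if e \<in> M then -1 else 1)"

definition outv :: "('v \<times> bool) option \<times> 'e option \<times> ('v \<times> bool) option \<Rightarrow> 'v \<Rightarrow> real" where
  "outv \<alpha> v = (case \<alpha> of (Some (a,b), Some e, _) \<Rightarrow> if a = v then (if b then 1 else -1) else 0 | _ \<Rightarrow> 0)"

definition innv :: "('v \<times> bool) option \<times> 'e option \<times> ('v \<times> bool) option \<Rightarrow> 'v \<Rightarrow> real" where
  "innv \<alpha> v = (case \<alpha> of (Some (a,b), Some e, Some (a',b')) \<Rightarrow> if a' = v then (if b then 1 else -1) else 0 | _ \<Rightarrow> 0)"

definition cnt :: "(('v \<times> bool) option \<times> 'e option \<times> ('v \<times> bool) option) list \<Rightarrow> 'e \<Rightarrow> real" where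
  "cnt W e = real (length (filter (\<lambda>\<alpha>. fst (snd \<alpha>) = Some e) W))"

lemma finArcs: "finite Arcs"
proof -
  let ?N = "insert None (Some ` (V \<times> (UNIV::bool set)))"
  let ?L = "insert None (Some ` E)"
  have "Arcs \<subseteq> ?N \<times> ?L \<times> ?N"
    using endsE BV unfolding Arcs_def M_def by auto
  moreover have "finite (?N \<times> ?L \<times> ?N)" using finV finE by auto
  ultimately show ?thesis by (rule finite_subset)
qed

lemma arc_edge:
  assumes "\<alpha> \<in> Arcs" "fst (snd \<alpha>) = Some e"
  shows "e \<in> E \<and> cst \<alpha> = sgn e * w e \<and> (\<forall>v. (if v \<in> ends e then sgn e else 0) = innv \<alpha> v + outv \<alpha> v)"
  using assms ME unfolding Arcs_def by (auto simp: cst_def sgn_def innv_def outv_def)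

lemma arc_nonedge:
  assumes "fst (snd \<alpha>) = None"
  shows "cst \<alpha> = 0" "innv \<alpha> v = 0" "outv \<alpha> v = 0"
  using assms by (auto simp: cst_def innv_def outv_def split: option.splits prod.splits)

lemma arc_local:
  assumes "\<alpha> \<in> Arcs" "\<beta> \<in> Arcs" "snd (snd \<alpha>) = fst \<beta>"
  shows "(v \<notin> B \<longrightarrow> innv \<alpha> v + outv \<beta> v = 0) \<and>
         (v \<in> B \<longrightarrow> innv \<alpha> v + outv \<beta> v \<ge> (if Mdeg v \<ge> 2 then -1 else 0))"
  using assms unfolding Arcs_def by (auto simp: innv_def outv_def)

lemma walk_set: "walk A s t a W \<Longrightarrow> set W \<subseteq> A"
  by (induction W arbitrary: a) auto

lemma chain:
  "walk Arcs fst (snd \<circ> snd) b W \<Longrightarrow> W \<noteq> [] \<Longrightarrow> \<gamma> \<in> Arcs \<Longrightarrow> fst \<gamma> = wend (snd \<circ> snd) b W \<Longrightarrow>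
   \<forall>(x,y)\<in>set (zip W (tl W @ [\<gamma>])). x \<in> Arcs \<and> y \<in> Arcs \<and> snd (snd x) = fst y"
proof (induction W arbitrary: b)
  case Nil then show ?case by simp
next
  case (Cons \<alpha> W)
  show ?case
  proof (cases W)
    case Nil then show ?thesis using Cons.prems by auto
  next
    case (Cons \<beta> W')
    have IH: "\<forall>(x,y)\<in>set (zip W (tl W @ [\<gamma>])). x \<in> Arcs \<and> y \<in> Arcs \<and> snd (snd x) = fst y"
      using Cons.IH[of "snd (snd \<alpha>)"] Cons.prems \<open>W = \<beta> # W'\<close> by auto
    then show ?thesis using Cons.prems \<open>W = \<beta> # W'\<close> by auto
  qed
qed

lemma cnt_Cons: "cnt (\<alpha> # W) e = (if fst (snd \<alpha>) = Some e then 1 else 0) + cnt W e"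
  by (simp add: cnt_def)

lemma sum_swap:
  assumes "finite F"
  shows "(\<Sum>e\<in>F. g e * cnt W e) =
    sum_list (map (\<lambda>\<alpha>. case fst (snd \<alpha>) of Some e \<Rightarrow> if e \<in> F then g e else 0 | None \<Rightarrow> 0) W)"
proof (induction W)
  case Nil then show ?case by (simp add: cnt_def)
next
  case (Cons \<alpha> W)
  have "(\<Sum>e\<in>F. g e * cnt (\<alpha> # W) e) = (\<Sum>e\<in>F. g e * (if fst (snd \<alpha>) = Some e then 1 else 0)) + (\<Sum>e\<in>F. g e * cnt W e)"
    by (simp add: cnt_Cons distrib_left sum.distrib)
  moreover have "(\<Sum>e\<in>F. g e * (if fst (snd \<alpha>) = Some e then 1 else 0)) =
      (case fst (snd \<alpha>) of Some e \<Rightarrow> if e \<in> F then g e else 0 | None \<Rightarrow> 0)"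
  proof (cases "fst (snd \<alpha>)")
    case None then show ?thesis by simp
  next
    case (Some e0)
    have "(\<Sum>e\<in>F. g e * (if fst (snd \<alpha>) = Some e then 1 else 0)) = (\<Sum>e\<in>F. if e0 = e then g e else 0)"
      using Some by (intro sum.cong) auto
    also have "\<dots> = (if e0 \<in> F then g e0 else 0)" using assms by (simp add: sum.delta)
    finally show ?thesis using Some by simp
  qed
  ultimately show ?case using Cons.IH by simp
qed

lemma cnt_nonneg: "cnt W e \<ge> 0" by (simp add: cnt_def)
lemma cnt_le: "cnt W e \<le> real (length W)" by (simp add: cnt_def)

lemma closed_pos:
  assumes wk: "walk Arcs fst (snd \<circ> snd) a W" and ne: "W \<noteq> []" and cl: "wend (snd \<circ> snd) a W = a"
    and ed: "\<exists>\<alpha>\<in>set W. fst (snd \<alpha>) \<noteq> None"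
  shows "sum_list (map cst W) > 0"
proof (rule ccontr)
  assume neg: "\<not> sum_list (map cst W) > 0"
  define n where "n = real (length W)"
  define \<epsilon> where "\<epsilon> = 1 / (2 * n + 2)"
  have n0: "n \<ge> 0" by (simp add: n_def)
  have ep: "\<epsilon> > 0" using n0 by (simp add: \<epsilon>_def)
  have epn: "\<epsilon> * n \<le> 1/2" using n0 by (simp add: \<epsilon>_def field_simps)
  have epc: "\<epsilon> * cnt W e \<le> 1/2" for e
    using cnt_le[of W e] epn ep unfolding n_def by (smt (verit) mult_left_mono)
  have epc0: "\<epsilon> * cnt W e \<ge> 0" for e using cnt_nonneg ep by simp
  define d where "d e = \<epsilon> * sgn e * cnt W e" for e
  define y where "y i = xstar i + (if fst i \<in> E then d (fst i) else 0)" for i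
  have WA: "set W \<subseteq> Arcs" using walk_set[OF wk] .
  have costW: "(\<Sum>e\<in>E. (w e * sgn e) * cnt W e) = sum_list (map cst W)"
    unfolding sum_swap[OF finE]
  proof (intro arg_cong[where f=sum_list] map_cong refl)
    fix \<alpha> assume "\<alpha> \<in> set W"
    then have "\<alpha> \<in> Arcs" using WA by auto
    then show "(case fst (snd \<alpha>) of Some e \<Rightarrow> if e \<in> E then w e * sgn e else 0 | None \<Rightarrow> 0) = cst \<alpha>"
      using arc_edge[of \<alpha>] arc_nonedge[of \<alpha>] by (cases "fst (snd \<alpha>)") auto
  qed
  have cy: "lp_cost E w y = lp_cost E w xstar + 2 * \<epsilon> * sum_list (map cst W)"
  proof -
    have "lp_cost E w y = (\<Sum>e\<in>E. w e * (xstar (e,True) + xstar (e,False)) + 2 * \<epsilon> * ((w e * sgn e) * cnt W e))"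
      unfolding cost_eq by (intro sum.cong) (auto simp: y_def d_def algebra_simps)
    also have "\<dots> = lp_cost E w xstar + 2 * \<epsilon> * (\<Sum>e\<in>E. (w e * sgn e) * cnt W e)"
      by (simp add: sum.distrib cost_eq sum_distrib_left)
    finally show ?thesis using costW by simp
  qed
  have f1: "\<forall>i. i \<notin> ddedges E \<longrightarrow> y i = 0"
    by (auto simp: y_def ddedges_def xstar_out)
  have f2: "\<forall>i\<in>ddedges E. 0 \<le> y i \<and> y i \<le> 1"
  proof
    fix i assume "i \<in> ddedges E"
    then obtain e b where i: "i = (e,b)" "e \<in> E" by (auto simp: ddedges_def)
    show "0 \<le> y i \<and> y i \<le> 1"
      using epc[of e] epc0[of e] xstar_val[OF i(2), of b] i
      by (auto simp: y_def d_def sgn_def)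
  qed
  have imb: "(\<Sum>i\<in>delta E ends v. y i) = 2 * real (Mdeg v) + 2 * \<epsilon> *
      sum_list (map (\<lambda>(x,z). innv x v + outv z v) (zip W (rotate1 W)))" for v
  proof -
    have "(\<Sum>i\<in>delta E ends v. y i) = (\<Sum>i\<in>delta E ends v. xstar i) + (\<Sum>e\<in>Ev v. 2 * d e)"
      unfolding sum_delta by (simp add: y_def sum.distrib Ev_def)
    also have "(\<Sum>e\<in>Ev v. 2 * d e) = 2 * \<epsilon> * (\<Sum>e\<in>E. (if v \<in> ends e then sgn e else 0) * cnt W e)"
      unfolding Ev_def sum.inter_filter[OF finE] by (auto simp: d_def sum_distrib_left intro!: sum.cong)
    also have "(\<Sum>e\<in>E. (if v \<in> ends e then sgn e else 0) * cnt W e) = sum_list (map (\<lambda>\<alpha>. innv \<alpha> v + outv \<alpha> v) W)"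
      unfolding sum_swap[OF finE]
    proof (intro arg_cong[where f=sum_list] map_cong refl)
      fix \<alpha> assume "\<alpha> \<in> set W"
      then have "\<alpha> \<in> Arcs" using WA by auto
      then show "(case fst (snd \<alpha>) of Some e \<Rightarrow> if e \<in> E then (if v \<in> ends e then sgn e else 0) else 0 | None \<Rightarrow> 0) = innv \<alpha> v + outv \<alpha> v"
        using arc_edge[of \<alpha>] arc_nonedge(2,3)[of \<alpha> v] by (cases "fst (snd \<alpha>)") auto
    qed
    also have "\<dots> = sum_list (map (\<lambda>(x,z). innv x v + outv z v) (zip W (rotate1 W)))"
      by (simp add: sum_list_zip_split sum_list_rotate1 sum_list_addf)
    finally show ?thesis using sum_x[of v] by simp
  qed
  have ch: "\<forall>(x,z)\<in>set (zip W (rotate1 W)). x \<in> Arcs \<and> z \<in> Arcs \<and> snd (snd x) = fst z"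
  proof -
    obtain \<alpha> W' where W: "W = \<alpha> # W'" using ne by (cases W) auto
    have "rotate1 W = tl W @ [\<alpha>]" using W by simp
    moreover have "\<alpha> \<in> Arcs" "fst \<alpha> = a" using wk W by auto
    ultimately show ?thesis using chain[OF wk ne, of \<alpha>] cl by simp
  qed
  have lenz: "length (zip W (rotate1 W)) = length W" by simp
  have trm: "(v \<notin> B \<longrightarrow> (case p of (x,z) \<Rightarrow> innv x v + outv z v) = 0) \<and>
     (v \<in> B \<longrightarrow> (case p of (x,z) \<Rightarrow> innv x v + outv z v) \<ge> (if Mdeg v \<ge> 2 then -1 else 0))"
    if "p \<in> set (zip W (rotate1 W))" for p v
  proof -
    obtain x z where p: "p = (x,z)" by (cases p)
    then have "x \<in> Arcs" "z \<in> Arcs" "snd (snd x) = fst z" using ch that by auto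
    from arc_local[OF this, of v] show ?thesis using p by simp
  qed
  have f3: "\<forall>v\<in>V - B. (\<Sum>i\<in>delta E ends v. y i) = 2"
  proof
    fix v assume v: "v \<in> V - B"
    have "sum_list (map (\<lambda>(x,z). innv x v + outv z v) (zip W (rotate1 W))) = sum_list (map (\<lambda>_. 0::real) (zip W (rotate1 W)))"
      using trm v by (intro arg_cong[where f=sum_list] map_cong) auto
    then show "(\<Sum>i\<in>delta E ends v. y i) = 2" using imb[of v] Mdeg_nb[of v] v by simp
  qed
  have f4: "\<forall>v\<in>V \<inter> B. (\<Sum>i\<in>delta E ends v. y i) \<ge> 2"
  proof
    fix v assume v: "v \<in> V \<inter> B"
    let ?S = "sum_list (map (\<lambda>(x,z). innv x v + outv z v) (zip W (rotate1 W)))"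
    show "(\<Sum>i\<in>delta E ends v. y i) \<ge> 2"
    proof (cases "Mdeg v \<ge> 2")
      case True
      have "?S \<ge> real (length (zip W (rotate1 W))) * (-1)"
        using trm[of _ v] v True by (intro sum_list_lb) auto
      then have "?S \<ge> - n" by (simp add: n_def)
      then have "\<epsilon> * ?S \<ge> \<epsilon> * (- n)" using ep by (intro mult_left_mono) auto
      then have "\<epsilon> * ?S \<ge> - (1/2)" using epn by simp
      moreover have "real (Mdeg v) \<ge> 2" using True by simp
      ultimately show ?thesis using imb[of v] by linarith
    next
      case False
      have "?S \<ge> real (length (zip W (rotate1 W))) * 0"
        using trm[of _ v] v False by (intro sum_list_lb) auto
      then have "\<epsilon> * ?S \<ge> 0" using ep by simp
      moreover have "real (Mdeg v) \<ge> 1" using Mdeg_bl[of v] v by simp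
      ultimately show ?thesis using imb[of v] by linarith
    qed
  qed
  have feasy: "lp_feasible V E ends B y" using f1 f2 f3 f4 by (simp add: lp_feasible_def)
  have "lp_cost E w y \<le> lp_cost E w xstar" using cy neg ep by (simp add: mult_nonneg_nonpos)
  then have yx: "y = xstar" using feasy better_eq by blast
  obtain \<alpha> e where al: "\<alpha> \<in> set W" "fst (snd \<alpha>) = Some e" using ed by auto
  have eE: "e \<in> E" using arc_edge[of \<alpha> e] al WA by auto
  have "cnt W e \<ge> 1"
  proof -
    have "filter (\<lambda>\<alpha>. fst (snd \<alpha>) = Some e) W \<noteq> []" using al by (auto simp: filter_empty_conv)
    then show ?thesis by (simp add: cnt_def Suc_le_eq length_greater_0_conv[symmetric] del: length_greater_0_conv)
  qed
  then have "d e \<noteq> 0" using ep by (simp add: d_def sgn_def)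
  moreover have "y (e,True) = xstar (e,True)" using yx by simp
  ultimately show False using eE by (simp add: y_def)
qed

lemma exists_potential:
  "\<exists>s \<delta>. \<delta> > 0 \<and>
     (\<forall>f\<in>E. f \<notin> M \<longrightarrow> (\<forall>v u. ends f = {v,u} \<longrightarrow> v \<noteq> u \<longrightarrow> w f \<ge> s v + s u + \<delta>)) \<and>
     (\<forall>g\<in>M. \<forall>u z. ends g = {u,z} \<longrightarrow> u \<noteq> z \<longrightarrow> w g \<le> s u + s z - \<delta>) \<and>
     (\<forall>v\<in>B. s v \<ge> 0) \<and> (\<forall>v\<in>B. Mdeg v \<ge> 2 \<longrightarrow> s v \<le> 0)"
proof -
  have "\<exists>\<sigma> \<delta>. \<delta> > 0 \<and> (\<forall>x\<in>Arcs. cst x \<ge> \<sigma> (fst x) - \<sigma> ((snd \<circ> snd) x) + (if fst (snd x) \<noteq> None then \<delta> else 0))"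
  proof (rule potential[OF finArcs])
    fix a W assume wk: "walk Arcs fst (snd \<circ> snd) a W" and ne: "W \<noteq> []" and cl: "wend (snd \<circ> snd) a W = a"
    show "0 \<le> sum_list (map cst W) \<and> ((\<exists>x\<in>set W. fst (snd x) \<noteq> None) \<longrightarrow> 0 < sum_list (map cst W))"
    proof (cases "\<exists>x\<in>set W. fst (snd x) \<noteq> None")
      case True then show ?thesis using closed_pos[OF wk ne cl] by simp
    next
      case False
      then have "\<forall>x\<in>set W. cst x = 0" using arc_nonedge(1) by auto
      then have "sum_list (map cst W) = 0" by (induction W) auto
      then show ?thesis using False by simp
    qed
  qed
  then obtain \<sigma> \<delta> where dp: "\<delta> > 0"
    and ar: "\<And>x. x \<in> Arcs \<Longrightarrow> cst x \<ge> \<sigma> (fst x) - \<sigma> ((snd \<circ> snd) x) + (if fst (snd x) \<noteq> None then \<delta> else 0)"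
    by blast
  define s where "s v = (\<sigma> (Some (v,True)) - \<sigma> (Some (v,False))) / 2" for v
  have A1: "w f \<ge> s v + s u + \<delta>" if "f \<in> E" "f \<notin> M" "ends f = {v,u}" "v \<noteq> u" for f v u
  proof -
    have "(Some(v,True), Some f, Some(u,False)) \<in> Arcs" "(Some(u,True), Some f, Some(v,False)) \<in> Arcs"
      using that unfolding Arcs_def by blast+
    from ar[OF this(1)] ar[OF this(2)] have "w f \<ge> \<sigma> (Some (v, True)) - \<sigma> (Some (u, False)) + \<delta>"
      "w f \<ge> \<sigma> (Some (u, True)) - \<sigma> (Some (v, False)) + \<delta>" by (auto simp: cst_def)
    then show ?thesis unfolding s_def by (intro avg1) auto
  qed
  have A2: "w g \<le> s u + s z - \<delta>" if "g \<in> M" "ends g = {u,z}" "u \<noteq> z" for g u z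
  proof -
    have "(Some(u,False), Some g, Some(z,True)) \<in> Arcs" "(Some(z,False), Some g, Some(u,True)) \<in> Arcs"
      using that unfolding Arcs_def by (blast, blast)
    from ar[OF this(1)] ar[OF this(2)] have "- w g \<ge> \<sigma> (Some (u, False)) - \<sigma> (Some (z, True)) + \<delta>"
      "- w g \<ge> \<sigma> (Some (z, False)) - \<sigma> (Some (u, True)) + \<delta>" by (auto simp: cst_def)
    then show ?thesis unfolding s_def by (intro avg2) auto
  qed
  have A3: "s v \<ge> 0" if "v \<in> B" for v
  proof -
    have "(None, None, Some(v,True)) \<in> Arcs" "(Some(v,False), None, None) \<in> Arcs"
      using that unfolding Arcs_def by blast+
    from ar[OF this(1)] ar[OF this(2)] have "0 \<ge> \<sigma> None - \<sigma> (Some (v, True))"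
      "0 \<ge> \<sigma> (Some (v, False)) - \<sigma> None" by (auto simp: cst_def)
    then show ?thesis unfolding s_def by (intro avg3) auto
  qed
  have A4: "s v \<le> 0" if "v \<in> B" "Mdeg v \<ge> 2" for v
  proof -
    have "(None, None, Some(v,False)) \<in> Arcs" "(Some(v,True), None, None) \<in> Arcs"
      using that unfolding Arcs_def by blast+
    from ar[OF this(1)] ar[OF this(2)] have "0 \<ge> \<sigma> None - \<sigma> (Some (v, False))"
      "0 \<ge> \<sigma> (Some (v, True)) - \<sigma> None" by (auto simp: cst_def)
    then show ?thesis unfolding s_def by (intro avg4) auto
  qed
  show ?thesis using dp A1 A2 A3 A4 by (intro exI[of _ s] exI[of _ \<delta>]) auto
qed

end


lemma Max_le_mult:
  fixes f g :: "'a \<Rightarrow> real"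
  assumes "finite S" "S \<noteq> {}" "finite T" "T \<noteq> {}" "K \<ge> 0"
    and "\<And>z. z \<in> S \<Longrightarrow> \<exists>z'\<in>T. f z \<le> K * g z'"
  shows "Max (f ` S) \<le> K * Max (g ` T)"
proof -
  have "Max (f ` S) \<in> f ` S" using assms(1,2) by (intro Max_in) auto
  then obtain z where z: "z \<in> S" "Max (f ` S) = f z" by auto
  obtain z' where z': "z' \<in> T" "f z \<le> K * g z'" using assms(6)[OF z(1)] by blast
  have "g z' \<le> Max (g ` T)" using assms(3) z'(1) by auto
  then have "K * g z' \<le> K * Max (g ` T)" using assms(5) by (rule mult_left_mono)
  then show ?thesis using z z' by linarith
qed

lemma card_swap: assumes "finite S" "l \<in> S" "i \<notin> S" shows "card (insert i (S - {l})) = card S"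
proof -
  have "card (insert i (S - {l})) = Suc (card (S - {l}))" using assms by (simp add: card_insert_disjoint)
  also have "\<dots> = card S"
  proof -
    have "card S > 0" using assms card_gt_0_iff by blast
    then show ?thesis using assms by (simp add: card_Diff_singleton)
  qed
  finally show ?thesis .
qed

lemma prod_swap:
  assumes "finite P" "l \<in> P" "\<forall>j\<in>P - {l}. z' j = z j"
  shows "(\<Prod>j\<in>P. f j (z j)) = f l (z l) * (\<Prod>j\<in>P - {l}. f j (z j))"
    "(\<Prod>j\<in>P. f j (z' j)) = f l (z' l) * (\<Prod>j\<in>P - {l}. f j (z j))"
proof -
  show "(\<Prod>j\<in>P. f j (z j)) = f l (z l) * (\<Prod>j\<in>P - {l}. f j (z j))"
    using assms(1,2) by (rule prod.remove)
  have "(\<Prod>j\<in>P. f j (z' j)) = f l (z' l) * (\<Prod>j\<in>P - {l}. f j (z' j))"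
    using assms(1,2) by (rule prod.remove)
  also have "(\<Prod>j\<in>P - {l}. f j (z' j)) = (\<Prod>j\<in>P - {l}. f j (z j))"
    using assms(3) by (intro prod.cong) auto
  finally show "(\<Prod>j\<in>P. f j (z' j)) = f l (z' l) * (\<Prod>j\<in>P - {l}. f j (z j))" .
qed

context setting
begin

abbreviation mf where "mf t \<equiv> fst (bp_msgs E ends B w t)"
abbreviation mv where "mv t \<equiv> snd (bp_msgs E ends B w t)"
abbreviation D where "D v \<equiv> delta E ends v"
abbreviation LA where "LA v i c \<equiv> local_assign E ends v i c"

definition val where
  "val t v i z = psi_fac E ends B v z * (\<Prod>j\<in>D v - {i}. mv t j v (z j))"

definition ok where "ok v n = (if v \<in> B then 2 \<le> n else n = (2::nat))"

lemma psi_fac_eq: "psi_fac E ends B v z = (if ok v (card {j\<in>D v. z j}) then 1 else 0)"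
  by (simp add: psi_fac_def ok_def Let_def)

lemma mf_Suc: "mf (Suc t) v i c = Max (val t v i ` LA v i c)"
  by (simp add: Let_def val_def)

lemma mv_Suc: "mv (Suc t) i v c = psi_var w i c * (\<Prod>v'\<in>ends (fst i) - {v}. mf t v' i c)"
  by (simp add: Let_def)

lemma mf_0: "mf 0 v i c = 1" and mv_0: "mv 0 i v c = 1" by simp_all

lemma LA_iff: "z \<in> LA v i c \<longleftrightarrow> (\<forall>j. j \<notin> D v \<longrightarrow> \<not> z j) \<and> z i = c"
  by (simp add: local_assign_def)

lemma fin_LA: "finite (LA v i c)"
proof -
  have "LA v i c \<subseteq> (\<lambda>S j. j \<in> S) ` Pow (D v)"
  proof
    fix z assume "z \<in> LA v i c"
    then have "{j. z j} \<in> Pow (D v)" "z = (\<lambda>j. j \<in> {j. z j})" by (auto simp: LA_iff)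
    then show "z \<in> (\<lambda>S j. j \<in> S) ` Pow (D v)" by blast
  qed
  moreover have "finite ((\<lambda>S j. j \<in> S) ` Pow (D v))" using fin_delta by simp
  ultimately show ?thesis by (rule finite_subset)
qed

lemma D_iff: "i \<in> D v \<longleftrightarrow> fst i \<in> E \<and> v \<in> ends (fst i)"
  by (cases i) (auto simp: delta_def ddedges_def)

lemma other_end: assumes "i \<in> D v"
  shows "\<exists>u. ends (fst i) = {v,u} \<and> u \<noteq> v \<and> u \<in> V \<and> v \<in> V \<and> i \<in> D u \<and> ends (fst i) - {v} = {u}"
proof -
  from assms have "fst i \<in> E" "v \<in> ends (fst i)" by (auto simp: D_iff)
  from ends2[OF this] obtain u where "ends (fst i) = {v,u}" "u \<noteq> v" "u \<in> V" "v \<in> V" by blast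
  then show ?thesis using \<open>fst i \<in> E\<close> by (intro exI[of _ u]) (auto simp: D_iff)
qed

lemma fin_S: "finite {j\<in>D v. z j}" using fin_delta by simp

lemma val_nonneg_gen:
  assumes "\<And>j c. j \<in> D v \<Longrightarrow> mv t j v c \<ge> 0"
  shows "val t v i z \<ge> 0"
  unfolding val_def psi_fac_eq using assms by (auto intro!: prod_nonneg)

lemma NN: "v \<in> V \<Longrightarrow> i \<in> D v \<Longrightarrow> mf t v i c \<ge> 0 \<and> mv t i v c \<ge> 0"
proof (induction t arbitrary: v i c)
  case 0 then show ?case by simp
next
  case (Suc t)
  define z0 where "z0 = (\<lambda>j. c \<and> j = i)"
  have z0: "z0 \<in> LA v i c" using Suc.prems by (auto simp: LA_iff z0_def)
  have "val t v i z0 \<ge> 0"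
    by (rule val_nonneg_gen) (use Suc.IH[of v] Suc.prems in auto)
  moreover have "val t v i z0 \<le> mf (Suc t) v i c"
    unfolding mf_Suc using fin_LA z0 by (intro Max_ge) auto
  moreover have "mv (Suc t) i v c \<ge> 0"
  proof -
    obtain u where u: "ends (fst i) - {v} = {u}" "u \<in> V" "i \<in> D u" using other_end[OF Suc.prems(2)] by blast
    then show ?thesis unfolding mv_Suc using Suc.IH[of u i c] by (simp add: psi_var_def)
  qed
  ultimately show ?case by linarith
qed

lemma val_nonneg: "v \<in> V \<Longrightarrow> val t v i z \<ge> 0"
  by (rule val_nonneg_gen) (use NN in auto)

lemma M_set: "{j\<in>D v. fst j \<in> M} = {e\<in>M. v \<in> ends e} \<times> UNIV"
  using ME by (auto simp: delta_eq Ev_def)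

lemma ok_M: assumes "v \<in> V" shows "ok v (card {j\<in>D v. fst j \<in> M})"
proof -
  have "card {j\<in>D v. fst j \<in> M} = 2 * Mdeg v"
    unfolding M_set Mdeg_def by (simp add: card_cartesian_product)
  then show ?thesis using Mdeg_nb[OF assms] Mdeg_bl[OF assms] by (auto simp: ok_def)
qed

lemma Pos: "v \<in> V \<Longrightarrow> i \<in> D v \<Longrightarrow> mf t v i (fst i \<in> M) > 0 \<and> mv t i v (fst i \<in> M) > 0"
proof (induction t arbitrary: v i)
  case 0 then show ?case by simp
next
  case (Suc t)
  define z0 where "z0 = (\<lambda>j. j \<in> D v \<and> fst j \<in> M)"
  have z0: "z0 \<in> LA v i (fst i \<in> M)" using Suc.prems by (auto simp: LA_iff z0_def)
  have "{j\<in>D v. z0 j} = {j\<in>D v. fst j \<in> M}" by (auto simp: z0_def)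
  then have ps: "psi_fac E ends B v z0 = 1" using ok_M[OF Suc.prems(1)] by (simp add: psi_fac_eq)
  have "(\<Prod>j\<in>D v - {i}. mv t j v (z0 j)) > 0"
  proof (rule prod_pos)
    fix j assume j: "j \<in> D v - {i}"
    then have "z0 j = (fst j \<in> M)" by (simp add: z0_def)
    then show "mv t j v (z0 j) > 0" using Suc.IH[of v j] Suc.prems j by simp
  qed
  then have "val t v i z0 > 0" using ps by (simp add: val_def)
  moreover have "val t v i z0 \<le> mf (Suc t) v i (fst i \<in> M)"
    unfolding mf_Suc using fin_LA z0 by (intro Max_ge) auto
  moreover have "mv (Suc t) i v (fst i \<in> M) > 0"
  proof -
    obtain u where u: "ends (fst i) - {v} = {u}" "u \<in> V" "i \<in> D u" using other_end[OF Suc.prems(2)] by blast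
    then show ?thesis unfolding mv_Suc using Suc.IH[of u i] by (simp add: psi_var_def)
  qed
  ultimately show ?case by linarith
qed

end

locale pot = setting +
  fixes s and \<delta> :: real
  assumes dpos: "\<delta> > 0"
    and A1: "\<forall>f\<in>E. f \<notin> M \<longrightarrow> (\<forall>v u. ends f = {v,u} \<longrightarrow> v \<noteq> u \<longrightarrow> w f \<ge> s v + s u + \<delta>)"
    and A2: "\<forall>g\<in>M. \<forall>u z. ends g = {u,z} \<longrightarrow> u \<noteq> z \<longrightarrow> w g \<le> s u + s z - \<delta>"
    and A3: "\<forall>v\<in>B. s v \<ge> 0"
    and A4: "\<forall>v\<in>B. Mdeg v \<ge> 2 \<longrightarrow> s v \<le> 0"
begin

definition MV where "MV t \<rho> \<longleftrightarrow> (\<forall>v\<in>V. \<forall>j\<in>D v.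
   (fst j \<notin> M \<longrightarrow> mv t j v True \<le> exp (- s v - \<delta> + \<rho>) * mv t j v False) \<and>
   (fst j \<in> M \<longrightarrow> exp (- s v + \<delta> - \<rho>) * mv t j v False \<le> mv t j v True))"

definition MF where "MF t \<rho> \<longleftrightarrow> (\<forall>v\<in>V. \<forall>i\<in>D v.
   (fst i \<in> M \<longrightarrow> exp (s v - \<rho>) * mf t v i False \<le> mf t v i True) \<and>
   (fst i \<notin> M \<longrightarrow> mf t v i True \<le> exp (s v + \<rho>) * mf t v i False))"

lemma MF0: assumes "\<forall>v\<in>V. \<bar>s v\<bar> \<le> \<rho>" shows "MF 0 \<rho>"
  unfolding MF_def using assms by (auto simp: abs_le_iff)

lemma MV0: assumes "\<forall>v\<in>V. \<bar>s v\<bar> + \<delta> \<le> \<rho>" shows "MV 0 \<rho>"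
  unfolding MV_def using assms by (auto simp: abs_le_iff)

lemma MF_mono: assumes "MF t \<rho>" "\<rho> \<le> \<rho>'" shows "MF t \<rho>'"
  unfolding MF_def
proof (intro ballI conjI impI)
  fix v i assume v: "v \<in> V" and i: "i \<in> D v"
  have n: "mf t v i False \<ge> 0" using NN[OF v i] by simp
  {
    assume "fst i \<in> M"
    then have "exp (s v - \<rho>) * mf t v i False \<le> mf t v i True" using assms(1) v i by (auto simp: MF_def)
    moreover have "exp (s v - \<rho>') * mf t v i False \<le> exp (s v - \<rho>) * mf t v i False"
      using assms(2) n by (intro mult_right_mono) auto
    ultimately show "exp (s v - \<rho>') * mf t v i False \<le> mf t v i True" by linarith
  }
  {
    assume "fst i \<notin> M"
    then have "mf t v i True \<le> exp (s v + \<rho>) * mf t v i False" using assms(1) v i by (auto simp: MF_def)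
    moreover have "exp (s v + \<rho>) * mf t v i False \<le> exp (s v + \<rho>') * mf t v i False"
      using assms(2) n by (intro mult_right_mono) auto
    ultimately show "mf t v i True \<le> exp (s v + \<rho>') * mf t v i False" by linarith
  }
qed

lemma MF_MV: assumes "MF t \<rho>" shows "MV (Suc t) \<rho>"
  unfolding MV_def
proof (intro ballI conjI impI)
  fix v j assume v: "v \<in> V" and j: "j \<in> D v"
  obtain u where u: "ends (fst j) = {v,u}" "u \<noteq> v" "u \<in> V" "j \<in> D u" "ends (fst j) - {v} = {u}"
    using other_end[OF j] by blast
  have fE: "fst j \<in> E" using j by (simp add: D_iff)
  have mvT: "mv (Suc t) j v True = exp (- w (fst j)) * mf t u j True"
    unfolding mv_Suc u(5) by (simp add: psi_var_def wdd_def bval_def)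
  have mvF: "mv (Suc t) j v False = mf t u j False"
    unfolding mv_Suc u(5) by (simp add: psi_var_def wdd_def bval_def)
  have n: "mf t u j False \<ge> 0" using NN[OF u(3,4)] by simp
  {
    assume nM: "fst j \<notin> M"
    have b: "mf t u j True \<le> exp (s u + \<rho>) * mf t u j False" using assms u nM by (auto simp: MF_def)
    have a1: "w (fst j) \<ge> s v + s u + \<delta>" using A1 fE nM u(1,2) by auto
    have "mv (Suc t) j v True \<le> exp (- w (fst j)) * (exp (s u + \<rho>) * mf t u j False)"
      unfolding mvT using b by (intro mult_left_mono) auto
    also have "\<dots> = exp (- w (fst j) + s u + \<rho>) * mf t u j False"
      using exp_add[of "- w (fst j)" "s u + \<rho>"] by (simp add: algebra_simps)
    also have "\<dots> \<le> exp (- s v - \<delta> + \<rho>) * mf t u j False" using a1 n by (intro mult_right_mono) auto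
    finally show "mv (Suc t) j v True \<le> exp (- s v - \<delta> + \<rho>) * mv (Suc t) j v False" unfolding mvF .
  }
  {
    assume iM: "fst j \<in> M"
    have b: "exp (s u - \<rho>) * mf t u j False \<le> mf t u j True" using assms u iM by (auto simp: MF_def)
    have a2: "w (fst j) \<le> s v + s u - \<delta>" using A2 iM u(1,2) by auto
    have "exp (- s v + \<delta> - \<rho>) * mf t u j False \<le> exp (- w (fst j) + s u - \<rho>) * mf t u j False"
      using a2 n by (intro mult_right_mono) auto
    also have "\<dots> = exp (- w (fst j)) * (exp (s u - \<rho>) * mf t u j False)"
      using exp_add[of "- w (fst j)" "s u - \<rho>"] by (simp add: algebra_simps)
    also have "\<dots> \<le> exp (- w (fst j)) * mf t u j True" using b by (intro mult_left_mono) auto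
    finally show "exp (- s v + \<delta> - \<rho>) * mv (Suc t) j v False \<le> mv (Suc t) j v True" unfolding mvF mvT .
  }
qed

lemma LA_ne: assumes "i \<in> D v" shows "LA v i c \<noteq> {}"
proof -
  have "(\<lambda>j. c \<and> j = i) \<in> LA v i c" using assms by (auto simp: LA_iff)
  then show ?thesis by blast
qed

lemma mv_nonneg: "v \<in> V \<Longrightarrow> j \<in> D v \<Longrightarrow> mv t j v c \<ge> 0" using NN by blast

lemma R_nonneg: assumes "v \<in> V" "P \<subseteq> D v" shows "(\<Prod>j\<in>P. mv t j v (z j)) \<ge> 0"
  using assms mv_nonneg by (intro prod_nonneg) auto

lemma MV_MF_LB:
  assumes mv: "MV t \<rho>" and v: "v \<in> V" and i: "i \<in> D v" and iM: "fst i \<in> M"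
  shows "exp (s v - max 0 (\<rho> - \<delta>)) * mf (Suc t) v i False \<le> mf (Suc t) v i True"
proof -
  let ?m0 = "mf (Suc t) v i False"
  let ?m1 = "mf (Suc t) v i True"
  let ?r = "max 0 (\<rho> - \<delta>)"
  have m0: "?m0 \<ge> 0" "?m1 \<ge> 0" using NN[OF v i, of "Suc t"] by blast+
  have finP: "finite (D v - {i})" using fin_delta by simp
  show ?thesis
  proof (cases "v \<in> B \<and> Mdeg v \<ge> 2")
    case True
    have "?m0 \<le> 1 * ?m1" unfolding mf_Suc
    proof (rule Max_le_mult[OF fin_LA LA_ne[OF i] fin_LA LA_ne[OF i]])
      fix z assume z: "z \<in> LA v i False"
      define z' where "z' = z(i := True)"
      have z': "z' \<in> LA v i True" using z i by (auto simp: LA_iff z'_def)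
      have pr: "(\<Prod>j\<in>D v - {i}. mv t j v (z' j)) = (\<Prod>j\<in>D v - {i}. mv t j v (z j))"
        by (intro prod.cong) (auto simp: z'_def)
      have sub: "{j\<in>D v. z j} \<subseteq> {j\<in>D v. z' j}" using z by (auto simp: z'_def LA_iff)
      have "card {j\<in>D v. z j} \<le> card {j\<in>D v. z' j}" using card_mono[OF fin_S sub] .
      then have "psi_fac E ends B v z \<le> psi_fac E ends B v z'" using True by (simp add: psi_fac_eq ok_def)
      moreover have "(\<Prod>j\<in>D v - {i}. mv t j v (z j)) \<ge> 0" by (rule R_nonneg[OF v]) auto
      ultimately have "val t v i z \<le> val t v i z'" unfolding val_def pr by (rule mult_right_mono)
      then show "\<exists>z'\<in>LA v i True. val t v i z \<le> 1 * val t v i z'" using z' by auto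
    qed simp
    moreover have "exp (s v - ?r) \<le> 1" using A4 True by auto
    moreover have "exp (s v - ?r) * ?m0 \<le> 1 * ?m0" by (rule mult_right_mono) (use calculation m0 in auto)
    ultimately show ?thesis by linarith
  next
    case False
    have Md: "Mdeg v \<le> 1" using False Mdeg_nb[OF v] by (cases "v \<in> B") auto
    have fi: "fst i \<in> E" "v \<in> ends (fst i)" using i by (auto simp: D_iff)
    have uniq: "fst j \<notin> M" if "j \<in> D v" "fst j \<noteq> fst i" for j
      using Mdeg1_unique[OF Md iM fi(2), of "fst j"] that by (auto simp: D_iff)
    define K where "K = exp (- s v - \<delta> + \<rho>)"
    have K0: "K \<ge> 0" by (simp add: K_def)
    have "?m0 \<le> K * ?m1" unfolding mf_Suc
    proof (rule Max_le_mult[OF fin_LA LA_ne[OF i] fin_LA LA_ne[OF i] K0])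
      fix z assume z: "z \<in> LA v i False"
      let ?S = "{j\<in>D v. z j}"
      show "\<exists>z'\<in>LA v i True. val t v i z \<le> K * val t v i z'"
      proof (cases "ok v (card ?S)")
        case False
        define z' where "z' = z(i := True)"
        have z': "z' \<in> LA v i True" using z i by (auto simp: LA_iff z'_def)
        have "val t v i z = 0" using False by (simp add: val_def psi_fac_eq)
        moreover have "K * val t v i z' \<ge> 0" using K0 val_nonneg[OF v] by simp
        ultimately show ?thesis using z' by auto
      next
        case True
        have c2: "card ?S \<ge> 2" using True by (auto simp: ok_def split: if_splits)
        have iS: "i \<notin> ?S" using z by (simp add: LA_iff)
        define i' where "i' = (fst i, \<not> snd i)"
        have "\<exists>l\<in>?S. l \<noteq> i'"
        proof (rule ccontr)
          assume "\<not> (\<exists>l\<in>?S. l \<noteq> i')"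
          then have "?S \<subseteq> {i'}" by auto
          then have "card ?S \<le> 1" using card_mono[of "{i'}" ?S] by simp
          then show False using c2 by simp
        qed
        then obtain l where l: "l \<in> ?S" "l \<noteq> i'" by blast
        have li: "l \<noteq> i" using l iS by auto
        have fl: "fst l \<noteq> fst i"
        proof
          assume "fst l = fst i"
          then have "l = i \<or> l = i'" unfolding i'_def by (cases l, cases i) auto
          then show False using li l by auto
        qed
        have lD: "l \<in> D v" using l by simp
        have lM: "fst l \<notin> M" using uniq[OF lD fl] .
        define z' where "z' = z(i := True, l := False)"
        have z': "z' \<in> LA v i True" using z i li by (auto simp: LA_iff z'_def)
        have S': "{j\<in>D v. z' j} = insert i (?S - {l})" using i li by (auto simp: z'_def)
        have "card {j\<in>D v. z' j} = card ?S" unfolding S' using card_swap[OF fin_S l(1) iS] .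
        then have ps: "psi_fac E ends B v z = 1" "psi_fac E ends B v z' = 1"
          using True by (simp_all add: psi_fac_eq)
        have lP: "l \<in> D v - {i}" using lD li by simp
        have agree: "\<forall>j\<in>D v - {i} - {l}. z' j = z j" by (auto simp: z'_def)
        note sw = prod_swap[OF finP lP agree, of "\<lambda>j c. mv t j v c"]
        define R where "R = (\<Prod>j\<in>D v - {i} - {l}. mv t j v (z j))"
        have R0: "R \<ge> 0" unfolding R_def by (rule R_nonneg[OF v]) auto
        have vz: "val t v i z = mv t l v True * R" using sw(1) ps l by (simp add: val_def R_def)
        have vz': "val t v i z' = mv t l v False * R" using sw(2) ps li by (simp add: val_def R_def z'_def)
        have b: "mv t l v True \<le> K * mv t l v False" using mv v lD lM by (auto simp: MV_def K_def)
        have "val t v i z \<le> K * mv t l v False * R" unfolding vz using b R0 by (rule mult_right_mono)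
        then show ?thesis using z' vz' by (intro bexI[of _ z']) (auto simp: algebra_simps)
      qed
    qed
    then have "exp (s v - ?r) * ?m0 \<le> exp (s v - ?r) * (K * ?m1)" by (intro mult_left_mono) auto
    also have "exp (s v - ?r) * (K * ?m1) = exp (s v - ?r + (- s v - \<delta> + \<rho>)) * ?m1"
      unfolding K_def by (simp only: mult.assoc[symmetric] exp_add[symmetric])
    also have "\<dots> \<le> 1 * ?m1" using m0 by (intro mult_right_mono) auto
    finally show ?thesis by simp
  qed
qed

lemma MV_MF_UB:
  assumes mv: "MV t \<rho>" and u: "u \<in> V" and i: "i \<in> D u" and iM: "fst i \<notin> M"
  shows "mf (Suc t) u i True \<le> exp (s u + max 0 (\<rho> - \<delta>)) * mf (Suc t) u i False"
proof -
  let ?r = "max 0 (\<rho> - \<delta>)"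
  define K where "K = exp (s u + ?r)"
  have K0: "K \<ge> 0" by (simp add: K_def)
  have finP: "finite (D u - {i})" using fin_delta by simp
  obtain g where g: "g \<in> M" "u \<in> ends g" using exM[OF u] by blast
  have gE: "g \<in> E" using g ME by auto
  have gi: "g \<noteq> fst i" using g iM by auto
  have jD: "(g,b) \<in> D u" for b using gE g by (simp add: D_iff)
  show ?thesis unfolding mf_Suc K_def[symmetric]
  proof (rule Max_le_mult[OF fin_LA LA_ne[OF i] fin_LA LA_ne[OF i] K0])
    fix z assume z: "z \<in> LA u i True"
    let ?S = "{j\<in>D u. z j}"
    show "\<exists>z'\<in>LA u i False. val t u i z \<le> K * val t u i z'"
    proof (cases "ok u (card ?S)")
      case False
      define z' where "z' = (\<lambda>j. z j \<and> False)"
      have z': "z' \<in> LA u i False" by (auto simp: LA_iff z'_def)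
      have "val t u i z = 0" using False by (simp add: val_def psi_fac_eq)
      moreover have "K * val t u i z' \<ge> 0" using K0 val_nonneg[OF u] by simp
      ultimately show ?thesis using z' by auto
    next
      case True
      have iS: "i \<in> ?S" using z i by (simp add: LA_iff)
      have ps: "psi_fac E ends B u z = 1" using True by (simp add: psi_fac_eq)
      show ?thesis
      proof (cases "(g,True) \<in> ?S \<and> (g,False) \<in> ?S")
        case True
        have "{i, (g,True), (g,False)} \<subseteq> ?S" using True iS by auto
        then have "card {i, (g,True), (g,False)} \<le> card ?S" by (rule card_mono[OF fin_S])
        moreover have "card {i, (g,True), (g,False)} = 3" using gi by (cases i) auto
        ultimately have c3: "card ?S \<ge> 3" by linarith
        have uB: "u \<in> B" using c3 \<open>ok u (card ?S)\<close> by (auto simp: ok_def split: if_splits)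
        define z' where "z' = z(i := False)"
        have z': "z' \<in> LA u i False" using z by (auto simp: LA_iff z'_def)
        have S': "{j\<in>D u. z' j} = ?S - {i}" by (auto simp: z'_def)
        have "card {j\<in>D u. z' j} = card ?S - 1" unfolding S' using iS fin_S by (simp add: card_Diff_singleton)
        then have ps': "psi_fac E ends B u z' = 1" using c3 uB by (simp add: psi_fac_eq ok_def)
        have pr: "(\<Prod>j\<in>D u - {i}. mv t j u (z' j)) = (\<Prod>j\<in>D u - {i}. mv t j u (z j))"
          by (intro prod.cong) (auto simp: z'_def)
        have eq: "val t u i z' = val t u i z" unfolding val_def pr ps ps' ..
        have K1: "K \<ge> 1" using A3 uB by (simp add: K_def)
        have "1 * val t u i z \<le> K * val t u i z" using K1 val_nonneg[OF u, of t i z]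
          by (rule mult_right_mono)
        then have "val t u i z \<le> K * val t u i z" by simp
        then have "val t u i z \<le> K * val t u i z'" using eq by simp
        then show ?thesis using z' by blast
      next
        case False
        then obtain j where j: "j \<in> D u" "fst j = g" "j \<notin> ?S" using jD by auto
        have ji: "j \<noteq> i" using j gi by auto
        define z' where "z' = z(i := False, j := True)"
        have z': "z' \<in> LA u i False" using z j ji by (auto simp: LA_iff z'_def)
        have S': "{j'\<in>D u. z' j'} = insert j (?S - {i})" using j ji by (auto simp: z'_def)
        have "card {j'\<in>D u. z' j'} = card ?S" unfolding S' using card_swap[OF fin_S iS] j by simp
        then have ps': "psi_fac E ends B u z' = 1" using True by (simp add: psi_fac_eq)
        have jP: "j \<in> D u - {i}" using j ji by simp
        have agree: "\<forall>j'\<in>D u - {i} - {j}. z' j' = z j'" by (auto simp: z'_def)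
        note sw = prod_swap[OF finP jP agree, of "\<lambda>j c. mv t j u c"]
        define R where "R = (\<Prod>j'\<in>D u - {i} - {j}. mv t j' u (z j'))"
        have R0: "R \<ge> 0" unfolding R_def by (rule R_nonneg[OF u]) auto
        have zj: "z j = False" using j by simp
        have vz: "val t u i z = mv t j u False * R" using sw(1) ps zj by (simp add: val_def R_def)
        have vz': "val t u i z' = mv t j u True * R" using sw(2) ps' ji by (simp add: val_def R_def z'_def)
        have jM: "fst j \<in> M" using j g by simp
        have b: "exp (- s u + \<delta> - \<rho>) * mv t j u False \<le> mv t j u True" using mv u j(1) jM by (auto simp: MV_def)
        have mF0: "mv t j u False \<ge> 0" "mv t j u True \<ge> 0" using mv_nonneg[OF u j(1)] by auto
        have "mv t j u False = exp (s u - \<delta> + \<rho>) * (exp (- s u + \<delta> - \<rho>) * mv t j u False)"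
          by (simp add: mult.assoc[symmetric] exp_add[symmetric])
        also have "\<dots> \<le> exp (s u - \<delta> + \<rho>) * mv t j u True" using b by (intro mult_left_mono) auto
        also have "\<dots> \<le> K * mv t j u True" unfolding K_def using mF0 by (intro mult_right_mono) auto
        finally have "mv t j u False * R \<le> K * mv t j u True * R" using R0 by (rule mult_right_mono)
        then show ?thesis using z' vz vz' by (intro bexI[of _ z']) (auto simp: algebra_simps)
      qed
    qed
  qed
qed

lemma MV_MF: assumes "MV t \<rho>" shows "MF (Suc t) (max 0 (\<rho> - \<delta>))"
  unfolding MF_def using MV_MF_LB[OF assms] MV_MF_UB[OF assms] by auto

lemma max_aux: "(d::real) > 0 \<Longrightarrow> max 0 (max 0 x - d) \<le> max 0 (x - d)"
  by (simp add: max_def)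

lemma final: "\<exists>T. \<forall>t\<ge>T. \<forall>i\<in>ddedges E. bp_estimate E ends B w t i = Some (xstar i)"
proof -
  define \<rho>0 where "\<rho>0 = (\<Sum>v\<in>V. \<bar>s v\<bar>) + \<delta>"
  have sv: "\<bar>s v\<bar> \<le> (\<Sum>v\<in>V. \<bar>s v\<bar>)" if "v \<in> V" for v
    using that finV by (intro member_le_sum) auto
  have r0: "\<rho>0 \<ge> 0" unfolding \<rho>0_def using dpos by (simp add: sum_nonneg)
  define a where "a t = max 0 (\<rho>0 - \<delta> * real (t div 2))" for t :: nat
  have a0: "a 0 = \<rho>0" using r0 by (simp add: a_def)
  have main: "MF t (a t) \<and> MV t (a (t - 1))" for t
  proof (induction t)
    case 0
    have b1: "\<forall>v\<in>V. \<bar>s v\<bar> \<le> \<rho>0"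
    proof
      fix v assume "v \<in> V"
      from sv[OF this] dpos show "\<bar>s v\<bar> \<le> \<rho>0" unfolding \<rho>0_def by linarith
    qed
    have b2: "\<forall>v\<in>V. \<bar>s v\<bar> + \<delta> \<le> \<rho>0"
    proof
      fix v assume "v \<in> V"
      from sv[OF this] show "\<bar>s v\<bar> + \<delta> \<le> \<rho>0" unfolding \<rho>0_def by linarith
    qed
    have "MF 0 \<rho>0" by (rule MF0[OF b1])
    moreover have "MV 0 \<rho>0" by (rule MV0[OF b2])
    ultimately show ?case using a0 by simp
  next
    case (Suc t)
    have le: "max 0 (a (t - 1) - \<delta>) \<le> a (Suc t)"
    proof (cases t)
      case 0 then show ?thesis using a0 r0 dpos by (simp add: a_def max_def)
    next
      case (Suc n)
      have "a (Suc t) = max 0 ((\<rho>0 - \<delta> * real (n div 2)) - \<delta>)"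
        using Suc by (simp add: a_def algebra_simps)
      moreover have "a (t - 1) = max 0 (\<rho>0 - \<delta> * real (n div 2))" using Suc by (simp add: a_def)
      ultimately show ?thesis using max_aux[OF dpos] by simp
    qed
    have "MF (Suc t) (a (Suc t))" using MF_mono[OF MV_MF[OF conjunct2[OF Suc.IH]] le] .
    moreover have "MV (Suc t) (a t)" using MF_MV[OF conjunct1[OF Suc.IH]] .
    ultimately show ?case by simp
  qed
  define T where "T = 2 * nat \<lceil>\<rho>0 / \<delta>\<rceil>"
  have aT: "a t = 0" if "t \<ge> T" for t
  proof -
    have "t div 2 \<ge> T div 2" using that by (rule div_le_mono)
    then have "t div 2 \<ge> nat \<lceil>\<rho>0 / \<delta>\<rceil>" by (simp add: T_def)
    then have "real (t div 2) \<ge> \<rho>0 / \<delta>" using real_nat_ceiling_ge[of "\<rho>0/\<delta>"] by linarith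
    then have "\<delta> * real (t div 2) \<ge> \<rho>0" using dpos by (simp add: field_simps)
    then show ?thesis by (simp add: a_def)
  qed
  have "\<forall>t\<ge>T. \<forall>i\<in>ddedges E. bp_estimate E ends B w t i = Some (xstar i)"
  proof (intro allI impI ballI)
    fix t i assume t: "T \<le> t" and i: "i \<in> ddedges E"
    have MFt: "MF t 0" using main[of t] aT[OF t] by simp
    obtain e b where ie: "i = (e,b)" "e \<in> E" using i by (auto simp: ddedges_def)
    from endsE ie(2) have "ends e \<subseteq> V" "card (ends e) = 2" by auto
    then obtain p q where pq: "ends e = {p,q}" "p \<noteq> q" by (auto simp: card_2_iff)
    have pV: "p \<in> V" "q \<in> V" using pq \<open>ends e \<subseteq> V\<close> by auto
    have iD: "i \<in> D p" "i \<in> D q" using ie pq by (auto simp: D_iff)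
    have bel: "belief E ends B w t i c = psi_var w i c * (mf t p i c * mf t q i c)" for c
      unfolding belief_def using ie pq by simp
    have pT: "psi_var w i True = exp (- w e)" "psi_var w i False = 1"
      using ie by (auto simp: psi_var_def wdd_def bval_def)
    have nn: "mf t p i c \<ge> 0" "mf t q i c \<ge> 0" for c using NN[OF pV(1) iD(1)] NN[OF pV(2) iD(2)] by auto
    let ?bT = "belief E ends B w t i True"
    let ?bF = "belief E ends B w t i False"
    have bF: "?bF = mf t p i False * mf t q i False" using bel[of False] pT by simp
    have bT: "?bT = exp (- w e) * (mf t p i True * mf t q i True)" using bel[of True] pT by simp
    have bF0: "?bF \<ge> 0" using bF nn by simp
    have ex: "exp (- w e) * (exp (s p) * exp (s q)) = exp (s p + s q - w e)"
      by (simp add: exp_add[symmetric] exp_diff)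
    show "bp_estimate E ends B w t i = Some (xstar i)"
    proof (cases "e \<in> M")
      case True
      have xs: "xstar i = 1" using ie xstar_val True by simp
      have lp: "exp (s p) * mf t p i False \<le> mf t p i True" and lq: "exp (s q) * mf t q i False \<le> mf t q i True"
        using MFt pV iD ie True unfolding MF_def by auto
      have a2: "w e \<le> s p + s q - \<delta>" using A2 True pq by auto
      have "(exp (s p) * mf t p i False) * (exp (s q) * mf t q i False) \<le> mf t p i True * mf t q i True"
        using lp lq nn by (intro mult_mono) auto
      then have "exp (- w e) * ((exp (s p) * mf t p i False) * (exp (s q) * mf t q i False)) \<le> ?bT"
        unfolding bT by (intro mult_left_mono) auto
      moreover have "exp (- w e) * ((exp (s p) * mf t p i False) * (exp (s q) * mf t q i False)) = exp (s p + s q - w e) * ?bF"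
        unfolding bF ex[symmetric] by (simp add: algebra_simps)
      moreover have "exp \<delta> * ?bF \<le> exp (s p + s q - w e) * ?bF" using a2 bF0 by (intro mult_right_mono) auto
      ultimately have ge: "exp \<delta> * ?bF \<le> ?bT" by linarith
      have pos: "?bT > 0"
      proof -
        have "mf t p i True > 0" "mf t q i True > 0" using Pos[OF pV(1) iD(1), of t] Pos[OF pV(2) iD(2), of t] ie True by auto
        then show ?thesis unfolding bT by simp
      qed
      have "?bT > ?bF"
      proof (cases "?bF = 0")
        case True then show ?thesis using pos by simp
      next
        case False
        then have "?bF > 0" using bF0 by simp
        moreover have "exp \<delta> > 1" using dpos by simp
        ultimately have "exp \<delta> * ?bF > 1 * ?bF" by (intro mult_strict_right_mono)
        then show ?thesis using ge by simp
      qed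
      then show ?thesis using xs by (simp add: bp_estimate_def)
    next
      case False
      have xs: "xstar i = 0" using ie xstar_val False by simp
      have lp: "mf t p i True \<le> exp (s p) * mf t p i False" and lq: "mf t q i True \<le> exp (s q) * mf t q i False"
        using MFt pV iD ie False unfolding MF_def by auto
      have a1: "w e \<ge> s p + s q + \<delta>" using A1 False ie(2) pq by auto
      have "mf t p i True * mf t q i True \<le> (exp (s p) * mf t p i False) * (exp (s q) * mf t q i False)"
        using lp lq nn by (intro mult_mono) auto
      then have "?bT \<le> exp (- w e) * ((exp (s p) * mf t p i False) * (exp (s q) * mf t q i False))"
        unfolding bT by (intro mult_left_mono) auto
      moreover have "exp (- w e) * ((exp (s p) * mf t p i False) * (exp (s q) * mf t q i False)) = exp (s p + s q - w e) * ?bF"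
        unfolding bF ex[symmetric] by (simp add: algebra_simps)
      moreover have "exp (s p + s q - w e) * ?bF \<le> exp (- \<delta>) * ?bF" using a1 bF0 by (intro mult_right_mono) auto
      ultimately have le: "?bT \<le> exp (- \<delta>) * ?bF" by linarith
      have pos: "?bF > 0"
      proof -
        have "mf t p i False > 0" "mf t q i False > 0" using Pos[OF pV(1) iD(1), of t] Pos[OF pV(2) iD(2), of t] ie False by auto
        then show ?thesis unfolding bF by simp
      qed
      have "exp (- \<delta>) < 1" using dpos by simp
      then have "exp (- \<delta>) * ?bF < 1 * ?bF" using pos by (intro mult_strict_right_mono)
      then have "?bT < ?bF" using le by simp
      then show ?thesis using xs by (simp add: bp_estimate_def)
    qed
  qed
  then show ?thesis by blast
qed

end

theorem corollary1:
  fixes V :: "'v set" and E :: "'e set" and ends :: "'e \<Rightarrow> 'v set"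
    and B :: "'v set" and w :: "'e \<Rightarrow> real" and xstar :: "('e \<times> bool) \<Rightarrow> real"
  assumes "finite V" and "finite E"
    and "\<forall>e \<in> E. ends e \<subseteq> V \<and> card (ends e) = 2"
    and "B \<subseteq> V"
    and "lp_optimal V E ends B w xstar"
    and "\<forall>y. lp_optimal V E ends B w y \<longrightarrow> y = xstar"
  shows "\<exists>T. \<forall>t \<ge> T. \<forall>i \<in> ddedges E. bp_estimate E ends B w t i = Some (xstar i)"
proof -
  interpret setting V E ends B w xstar using assms by unfold_locales
  obtain s \<delta> where "\<delta> > 0"
     "\<forall>f\<in>E. f \<notin> M \<longrightarrow> (\<forall>v u. ends f = {v,u} \<longrightarrow> v \<noteq> u \<longrightarrow> w f \<ge> s v + s u + \<delta>)"
     "\<forall>g\<in>M. \<forall>u z. ends g = {u,z} \<longrightarrow> u \<noteq> z \<longrightarrow> w g \<le> s u + s z - \<delta>"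
     "\<forall>v\<in>B. s v \<ge> 0" "\<forall>v\<in>B. Mdeg v \<ge> 2 \<longrightarrow> s v \<le> 0"
    using exists_potential by blast
  then interpret pot V E ends B w xstar s \<delta> by unfold_locales
  show ?thesis by (rule final)
qed

end
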